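(* Let $G$ be a graph and $k \ge \gamma(G)$ an integer. If $D_{k+1}(G)$ is connected, then $X_k(G)$ is connected.
   Context: All graphs are finite and simple. A set $S \subseteq V(G)$ is a dominating set of $G$ if every vertex of $V(G)\setminus S$ is adjacent to a vertex of $S$. $\gamma(G)$ is the minimum cardinality of a dominating set of $G$. For an integer $k \ge \gamma(G)$, the $k$-dominating graph $D_k(G)$ is the graph whose vertices are the dominating sets of $G$ of cardinality at most $k$, with two such sets $A,B$ adjacent if and only if their symmetric difference $(A\setminus B)\cup(B\setminus A)$ consists of exactly one vertex of $G$. $X_k(G)$ is the graph whose vertices are the dominating sets of $G$ of cardinality exactly $k$, with two such sets $S,T$ adjacent if and only if there exist $s \in S$ and $t \in T$ with $T = (S\setminus\{s\})\cup\{t\}$ (and $S \neq T$). *)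

theory Defs
  imports Main
begin

definition simple_graph :: "'a set \<Rightarrow> ('a \<Rightarrow> 'a \<Rightarrow> bool) \<Rightarrow> bool" where
  "simple_graph V E \<longleftrightarrow> finite V \<and> (\<forall>x y. E x y \<longrightarrow> x \<in> V \<and> y \<in> V)
     \<and> (\<forall>x y. E x y \<longrightarrow> E y x) \<and> (\<forall>x. \<not> E x x)"

definition dominating :: "'a set \<Rightarrow> ('a \<Rightarrow> 'a \<Rightarrow> bool) \<Rightarrow> 'a set \<Rightarrow> bool" where
  "dominating V E S \<longleftrightarrow> S \<subseteq> V \<and> (\<forall>v \<in> V - S. \<exists>u \<in> S. E v u)"

definition domination_number :: "'a set \<Rightarrow> ('a \<Rightarrow> 'a \<Rightarrow> bool) \<Rightarrow> nat" where
  "domination_number V E = Min {card S | S. dominating V E S}"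

definition connected_graph :: "'b set \<Rightarrow> ('b \<Rightarrow> 'b \<Rightarrow> bool) \<Rightarrow> bool" where
  "connected_graph N R \<longleftrightarrow>
     (\<forall>A \<in> N. \<forall>B \<in> N. (\<lambda>x y. x \<in> N \<and> y \<in> N \<and> R x y)\<^sup>*\<^sup>* A B)"

definition D_verts :: "'a set \<Rightarrow> ('a \<Rightarrow> 'a \<Rightarrow> bool) \<Rightarrow> nat \<Rightarrow> 'a set set" where
  "D_verts V E k = {S. dominating V E S \<and> card S \<le> k}"

definition D_adj :: "'a set \<Rightarrow> 'a set \<Rightarrow> bool" where
  "D_adj A B \<longleftrightarrow> card ((A - B) \<union> (B - A)) = 1"

definition X_verts :: "'a set \<Rightarrow> ('a \<Rightarrow> 'a \<Rightarrow> bool) \<Rightarrow> nat \<Rightarrow> 'a set set" where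
  "X_verts V E k = {S. dominating V E S \<and> card S = k}"

definition X_adj :: "'a set \<Rightarrow> 'a set \<Rightarrow> bool" where
  "X_adj S T \<longleftrightarrow> S \<noteq> T \<and> (\<exists>s \<in> S. \<exists>t \<in> T. T = (S - {s}) \<union> {t})"

end

theory Submission
  imports Defs
begin

definition RR :: "'a set \<Rightarrow> ('a \<Rightarrow> 'a \<Rightarrow> bool) \<Rightarrow> nat \<Rightarrow> 'a set \<Rightarrow> 'a set set" where
  "RR V E k A = {B \<in> X_verts V E k. if card A \<le> k then A \<subseteq> B else B \<subseteq> A}"

lemma dom_sup: "dominating V E A \<Longrightarrow> A \<subseteq> B \<Longrightarrow> B \<subseteq> V \<Longrightarrow> dominating V E B"
  unfolding dominating_def by blast

lemma sup_conn:
  assumes "finite V" "dominating V E A"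
  shows "n = card (B - B') \<Longrightarrow> A \<subseteq> B \<Longrightarrow> A \<subseteq> B' \<Longrightarrow> B \<in> X_verts V E k \<Longrightarrow> B' \<in> X_verts V E k
     \<Longrightarrow> (\<lambda>x y. x \<in> X_verts V E k \<and> y \<in> X_verts V E k \<and> X_adj x y)\<^sup>*\<^sup>* B B'"
proof (induction n arbitrary: B)
  case 0
  have fin: "finite B" "finite B'" using 0 assms(1) unfolding X_verts_def dominating_def
    by (auto intro: finite_subset)
  have "B \<subseteq> B'" using 0 fin by auto
  moreover have "card B = card B'" using 0 unfolding X_verts_def by auto
  ultimately have "B = B'" using fin card_subset_eq by blast
  then show ?case by simp
next
  case (Suc n)
  have fin: "finite B" "finite B'" using Suc.prems assms(1) unfolding X_verts_def dominating_def
    by (auto intro: finite_subset)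
  have cB: "card B = k" "card B' = k" using Suc.prems unfolding X_verts_def by auto
  obtain x where x: "x \<in> B" "x \<notin> B'" using Suc.prems(1)
    by (metis Diff_iff card.empty ex_in_conv nat.simps(3))
  have "\<not> B' \<subseteq> B"
  proof
    assume "B' \<subseteq> B"
    then have "B' = B" using fin cB card_subset_eq by metis
    then show False using x by simp
  qed
  then obtain y where y: "y \<in> B'" "y \<notin> B" by blast
  define B1 where "B1 = insert y (B - {x})"
  have xA: "x \<notin> A" using x Suc.prems by blast
  have cB1: "card B1 = k" unfolding B1_def using fin x y cB
    by (simp add: card_Diff_singleton) (metis One_nat_def Suc_pred card_gt_0_iff emptyE)
  have BV: "B \<subseteq> V" "B' \<subseteq> V" using Suc.prems unfolding X_verts_def dominating_def by auto
  have B1V: "B1 \<subseteq> V" unfolding B1_def using BV y by auto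
  have AB1: "A \<subseteq> B1" unfolding B1_def using Suc.prems xA by blast
  have domB1: "dominating V E B1" using dom_sup[OF assms(2) AB1 B1V] .
  have B1X: "B1 \<in> X_verts V E k" unfolding X_verts_def using domB1 cB1 by simp
  have "B1 - B' = (B - B') - {x}" unfolding B1_def using y by auto
  then have "card (B1 - B') = n" using Suc.prems(1) x fin by (simp add: card_Diff_singleton)
  then have IH: "(\<lambda>x y. x \<in> X_verts V E k \<and> y \<in> X_verts V E k \<and> X_adj x y)\<^sup>*\<^sup>* B1 B'"
    using Suc.IH[of B1] AB1 Suc.prems B1X by simp
  have adj: "X_adj B B1" unfolding X_adj_def B1_def using x y by auto
  show ?case
    by (rule converse_rtranclp_into_rtranclp[OF _ IH]) (use adj B1X Suc.prems in simp)
qed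

lemma pair_conn:
  assumes "finite V" "A \<in> D_verts V E (k+1)" "S \<in> RR V E k A" "T \<in> RR V E k A"
  shows "(\<lambda>x y. x \<in> X_verts V E k \<and> y \<in> X_verts V E k \<and> X_adj x y)\<^sup>*\<^sup>* S T"
proof (cases "card A \<le> k")
  case True
  then show ?thesis using sup_conn[OF assms(1), where A=A and B=S and B'=T and n="card (S - T)"] assms unfolding RR_def D_verts_def by auto
next
  case False
  then have cA: "card A = k + 1" using assms(2) unfolding D_verts_def by auto
  have SA: "S \<subseteq> A" "T \<subseteq> A" using assms False unfolding RR_def by auto
  have SX: "S \<in> X_verts V E k" "T \<in> X_verts V E k" using assms unfolding RR_def by auto
  have finA: "finite A" using cA card.infinite by fastforce
  show ?thesis
  proof (cases "S = T")
    case True then show ?thesis by simp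
  next
    case ne: False
    have "card (A - S) = 1" using SA SX cA finA unfolding X_verts_def by (simp add: card_Diff_subset finite_subset)
    then obtain x where x: "A - S = {x}" by (meson card_1_singletonE)
    have "card (A - T) = 1" using SA SX cA finA unfolding X_verts_def by (simp add: card_Diff_subset finite_subset)
    then obtain y where y: "A - T = {y}" by (meson card_1_singletonE)
    have S: "S = A - {x}" using x SA by blast
    have T: "T = A - {y}" using y SA by blast
    have xy: "x \<noteq> y" using S T ne by auto
    have xA: "x \<in> A" "y \<in> A" using x y by auto
    have "X_adj S T" unfolding X_adj_def
    proof (intro conjI bexI)
      show "S \<noteq> T" by fact
      show "T = S - {y} \<union> {x}" using S T xy xA by auto
      show "y \<in> S" using S xy xA by auto
      show "x \<in> T" using T xy xA by auto
    qed
    then show ?thesis using SX by auto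
  qed
qed

lemma exists_sup:
  assumes "finite V" "A' \<subseteq> V" "card A' \<le> k" "k \<le> card V"
  shows "\<exists>B. A' \<subseteq> B \<and> B \<subseteq> V \<and> card B = k"
proof -
  have fA: "finite A'" using assms finite_subset by blast
  have "k - card A' \<le> card (V - A')" using assms by (simp add: card_Diff_subset fA)
  then obtain P where P: "P \<subseteq> V - A'" "card P = k - card A'" by (meson obtain_subset_with_card_n)
  have fP: "finite P" using P assms(1) finite_subset by blast
  have dj: "A' \<inter> P = {}" using P by blast
  have "card (A' \<union> P) = card A' + card P" using card_Un_disjoint[OF fA fP dj] .
  then have "card (A' \<union> P) = k" using P assms by simp
  then show ?thesis using P assms by (intro exI[of _ "A' \<union> P"]) auto
qed

lemma edge_ins:
  assumes "finite V" "k \<le> card V" "A \<in> D_verts V E (k+1)" "insert x A \<in> D_verts V E (k+1)" "x \<notin> A"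
  shows "\<exists>W. W \<in> RR V E k A \<and> W \<in> RR V E k (insert x A)"
proof -
  have d4: "dominating V E (insert x A)" "card (insert x A) \<le> k + 1" using assms(4) unfolding D_verts_def by simp_all
  have d3: "dominating V E A" using assms(3) unfolding D_verts_def by simp
  have AV: "insert x A \<subseteq> V" using d4(1) unfolding dominating_def by blast
  have finA: "finite A" using AV by (intro finite_subset[OF _ assms(1)]) auto
  have ci: "card (insert x A) = card A + 1" using finA assms(5) by simp
  show ?thesis
  proof (cases "card (insert x A) \<le> k")
    case True
    obtain B where B: "insert x A \<subseteq> B" "B \<subseteq> V" "card B = k" using exists_sup[OF assms(1) AV True assms(2)] by blast
    have "dominating V E B" using dom_sup[OF d4(1) B(1) B(2)] .
    then have BX: "B \<in> X_verts V E k" using B(3) unfolding X_verts_def by simp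
    have c1: "card A \<le> k" using True ci by simp
    have "B \<in> RR V E k A" unfolding RR_def using BX c1 B(1) by simp
    moreover have "B \<in> RR V E k (insert x A)" unfolding RR_def using BX True B(1) by simp
    ultimately show ?thesis by blast
  next
    case False
    then have "card (insert x A) = k + 1" using d4(2) by simp
    then have cA: "card A = k" using ci by simp
    then have AX: "A \<in> X_verts V E k" using d3 unfolding X_verts_def by simp
    have "A \<in> RR V E k A" unfolding RR_def using AX cA by simp
    moreover have "A \<in> RR V E k (insert x A)" unfolding RR_def using AX False by auto
    ultimately show ?thesis by blast
  qed
qed

lemma l1: assumes z: "(A - A') \<union> (A' - A) = {z}" and n: "z \<notin> A" shows "A' = insert z A \<and> z \<notin> A"
proof -
  have "z \<in> (A - A') \<union> (A' - A)" using z by simp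
  then have zA': "z \<in> A'" using n by blast
  have "A \<subseteq> A'"
  proof
    fix y assume y: "y \<in> A"
    show "y \<in> A'"
    proof (rule ccontr)
      assume "y \<notin> A'"
      then have "y \<in> (A - A') \<union> (A' - A)" using y by blast
      then have "y = z" using z by simp
      then show False using y n by simp
    qed
  qed
  moreover have "A' \<subseteq> insert z A"
  proof
    fix y assume y: "y \<in> A'"
    show "y \<in> insert z A"
    proof (cases "y \<in> A")
      case False
      then have "y \<in> (A - A') \<union> (A' - A)" using y by blast
      then have "y = z" using z by simp
      then show ?thesis by simp
    qed simp
  qed
  ultimately show ?thesis using zA' n by blast
qed

lemma edge:
  assumes "finite V" "k \<le> card V" "A \<in> D_verts V E (k+1)" "A' \<in> D_verts V E (k+1)" "D_adj A A'"
  shows "\<exists>W. W \<in> RR V E k A \<and> W \<in> RR V E k A'"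
proof -
  obtain z where z: "(A - A') \<union> (A' - A) = {z}" using assms(5) unfolding D_adj_def by (meson card_1_singletonE)
  show ?thesis
  proof (cases "z \<in> A")
    case True
    have z': "(A' - A) \<union> (A - A') = {z}" using z by (simp add: Un_commute)
    have nz: "z \<notin> A'"
    proof
      assume "z \<in> A'"
      then have "z \<notin> (A - A') \<union> (A' - A)" using True by simp
      then show False using z by simp
    qed
    have "A = insert z A'" "z \<notin> A'" using l1[OF z' nz] by simp_all
    then have "\<exists>W. W \<in> RR V E k A' \<and> W \<in> RR V E k (insert z A')"
      using edge_ins[OF assms(1,2,4), of z] assms(3) by simp
    then show ?thesis using \<open>A = insert z A'\<close> by blast
  next
    case False
    have "A' = insert z A" "z \<notin> A" using l1[OF z False] by simp_all
    then have "\<exists>W. W \<in> RR V E k A \<and> W \<in> RR V E k (insert z A)"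
      using edge_ins[OF assms(1,2,3), of z] assms(4) by simp
    then show ?thesis using \<open>A' = insert z A\<close> by blast
  qed
qed

lemma path_conn:
  assumes "finite V" "k \<le> card V"
  shows "(\<lambda>x y. x \<in> D_verts V E (k+1) \<and> y \<in> D_verts V E (k+1) \<and> D_adj x y)\<^sup>*\<^sup>* A B
    \<Longrightarrow> A \<in> D_verts V E (k+1) \<Longrightarrow>
    \<forall>S\<in>RR V E k A. \<forall>T\<in>RR V E k B. (\<lambda>x y. x \<in> X_verts V E k \<and> y \<in> X_verts V E k \<and> X_adj x y)\<^sup>*\<^sup>* S T"
proof (induction rule: rtranclp_induct)
  case base
  then show ?case using pair_conn[OF assms(1)] by blast
next
  case (step A1 B)
  show ?case
  proof (intro ballI)
    fix S T assume S: "S \<in> RR V E k A" and T: "T \<in> RR V E k B"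
    obtain W where W: "W \<in> RR V E k A1" "W \<in> RR V E k B" using edge[OF assms] step by blast
    have 1: "(\<lambda>x y. x \<in> X_verts V E k \<and> y \<in> X_verts V E k \<and> X_adj x y)\<^sup>*\<^sup>* S W" using step S W by blast
    have 2: "(\<lambda>x y. x \<in> X_verts V E k \<and> y \<in> X_verts V E k \<and> X_adj x y)\<^sup>*\<^sup>* W T"
      using pair_conn[OF assms(1), of B] step W T by blast
    show "(\<lambda>x y. x \<in> X_verts V E k \<and> y \<in> X_verts V E k \<and> X_adj x y)\<^sup>*\<^sup>* S T"
      using 1 2 by (rule rtranclp_trans)
  qed
qed

theorem theorem12:
  fixes V :: "'a set" and E :: "'a \<Rightarrow> 'a \<Rightarrow> bool" and k :: nat
  assumes "simple_graph V E"
    and "k \<ge> domination_number V E"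
    and "connected_graph (D_verts V E (k + 1)) D_adj"
  shows "connected_graph (X_verts V E k) X_adj"
  unfolding connected_graph_def
proof (intro ballI)
  fix S T assume S: "S \<in> X_verts V E k" and T: "T \<in> X_verts V E k"
  have fV: "finite V" using assms(1) unfolding simple_graph_def by simp
  have SV: "S \<subseteq> V" "card S = k" using S unfolding X_verts_def dominating_def by auto
  have kV: "k \<le> card V" using card_mono[OF fV SV(1)] SV(2) by simp
  have SD: "S \<in> D_verts V E (k+1)" "T \<in> D_verts V E (k+1)" using S T unfolding X_verts_def D_verts_def by auto
  have p: "(\<lambda>x y. x \<in> D_verts V E (k+1) \<and> y \<in> D_verts V E (k+1) \<and> D_adj x y)\<^sup>*\<^sup>* S T"
    using assms(3) SD unfolding connected_graph_def by blast
  have "S \<in> RR V E k S" "T \<in> RR V E k T" using S T unfolding RR_def X_verts_def by auto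
  then show "(\<lambda>x y. x \<in> X_verts V E k \<and> y \<in> X_verts V E k \<and> X_adj x y)\<^sup>*\<^sup>* S T"
    using path_conn[OF fV kV p SD(1)] by blast
qed

end
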